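(* Let $S=(\mathcal{E},\Sigma,X,\mathcal{O})$ and $S'=(\mathcal{E}',\Sigma',X',\mathcal{O}')$ be entities such that $S$ is a sub entity of $S'$ with connecting functions $m,n,l$. Then $m$ and $n$ are continuous for the eigen closure systems: if $F\in\mathcal{F}_{eig}$ then $m^{-1}(F)\in\mathcal{F}'_{eig}$, and if $G'\in\mathcal{G}'_{eig}$ then $n^{-1}(G')\in\mathcal{G}_{eig}$.
   Context: An entity $S=(\mathcal{E},\Sigma,X,\mathcal{O})$ consists of sets $\mathcal{E}$ (experiments), $\Sigma$ (states) and for each $e\in\mathcal{E},p\in\Sigma$ a nonempty set $O(e,p)$, with $X=\bigcup O(e,p)$; $O(e)=\bigcup_pO(e,p)$, $O(p)=\bigcup_eO(e,p)$. $S$ is a sub entity of $S'$ iff there are a surjective function $m:\Sigma'\to\Sigma$, an injective function $n:\mathcal{E}\to\mathcal{E}'$ and an injective function $l:X\to X'$ such that for each $p'\in\Sigma'$ and $e\in\mathcal{E}$, $l$ maps $O(e,m(p'))$ onto $O'(n(e),p')$, i.e. $l(O(e,m(p')))=O'(n(e),p')$. State eigen closure system: for $e\in\mathcal{E}$, $eig_e(A)=\{p\in\Sigma:O(e,p)\subseteq A\}$ ($A\subseteq O(e)$), $\mathcal{F}(e)=\{eig_e(A)\}$, and $\mathcal{F}_{eig}$ is the set of intersections of families of elements of $\bigcup_e\mathcal{F}(e)$. Experiment eigen closure system: for $p\in\Sigma$, $eig_p(A)=\{e\in\mathcal{E}:O(e,p)\subseteq A\}$ ($A\subseteq O(p)$),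 $\mathcal{G}(p)=\{eig_p(A)\}$, and $\mathcal{G}_{eig}$ is the set of intersections of families of elements of $\bigcup_p\mathcal{G}(p)$. Primed objects are defined analogously for $S'$. *)

theory Defs
  imports Main
begin

text \<open>An entity is given by a set of experiments E, a set of states St and an
outcome assignment Q; Q e p is the (nonempty) outcome set of e in state p.\<close>

definition entity :: "'e set \<Rightarrow> 'p set \<Rightarrow> ('e \<Rightarrow> 'p \<Rightarrow> 'x set) \<Rightarrow> bool" where
  "entity E St Q \<longleftrightarrow> (\<forall>e\<in>E. \<forall>p\<in>St. Q e p \<noteq> {})"

definition outcomes :: "'e set \<Rightarrow> 'p set \<Rightarrow> ('e \<Rightarrow> 'p \<Rightarrow> 'x set) \<Rightarrow> 'x set" where
  "outcomes E St Q = (\<Union>e\<in>E. \<Union>p\<in>St. Q e p)"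

definition outcomes_exp :: "'p set \<Rightarrow> ('e \<Rightarrow> 'p \<Rightarrow> 'x set) \<Rightarrow> 'e \<Rightarrow> 'x set" where
  "outcomes_exp St Q e = (\<Union>p\<in>St. Q e p)"

definition outcomes_state :: "'e set \<Rightarrow> ('e \<Rightarrow> 'p \<Rightarrow> 'x set) \<Rightarrow> 'p \<Rightarrow> 'x set" where
  "outcomes_state E Q p = (\<Union>e\<in>E. Q e p)"

definition sub_entity_via ::
  "'e set \<Rightarrow> 'p set \<Rightarrow> ('e \<Rightarrow> 'p \<Rightarrow> 'x set) \<Rightarrow>
   'e2 set \<Rightarrow> 'p2 set \<Rightarrow> ('e2 \<Rightarrow> 'p2 \<Rightarrow> 'x2 set) \<Rightarrow>
   ('p2 \<Rightarrow> 'p) \<Rightarrow> ('e \<Rightarrow> 'e2) \<Rightarrow> ('x \<Rightarrow> 'x2) \<Rightarrow> bool" where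
  "sub_entity_via E St Q E' St' Q' m n l \<longleftrightarrow>
     m ` St' = St \<and>
     n ` E \<subseteq> E' \<and> inj_on n E \<and>
     l ` outcomes E St Q \<subseteq> outcomes E' St' Q' \<and> inj_on l (outcomes E St Q) \<and>
     (\<forall>p'\<in>St'. \<forall>e\<in>E. l ` Q e (m p') = Q' (n e) p')"

definition eig_state :: "'p set \<Rightarrow> ('e \<Rightarrow> 'p \<Rightarrow> 'x set) \<Rightarrow> 'e \<Rightarrow> 'x set \<Rightarrow> 'p set" where
  "eig_state St Q e A = {p \<in> St. Q e p \<subseteq> A}"

definition F_exp :: "'p set \<Rightarrow> ('e \<Rightarrow> 'p \<Rightarrow> 'x set) \<Rightarrow> 'e \<Rightarrow> 'p set set" where
  "F_exp St Q e = {eig_state St Q e A | A. A \<subseteq> outcomes_exp St Q e}"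

text \<open>Intersections of families (the empty family has intersection St).\<close>
definition F_eig :: "'e set \<Rightarrow> 'p set \<Rightarrow> ('e \<Rightarrow> 'p \<Rightarrow> 'x set) \<Rightarrow> 'p set set" where
  "F_eig E St Q = {St \<inter> \<Inter>\<A> | \<A>. \<A> \<subseteq> (\<Union>e\<in>E. F_exp St Q e)}"

definition eig_exp :: "'e set \<Rightarrow> ('e \<Rightarrow> 'p \<Rightarrow> 'x set) \<Rightarrow> 'p \<Rightarrow> 'x set \<Rightarrow> 'e set" where
  "eig_exp E Q p A = {e \<in> E. Q e p \<subseteq> A}"

definition G_state :: "'e set \<Rightarrow> ('e \<Rightarrow> 'p \<Rightarrow> 'x set) \<Rightarrow> 'p \<Rightarrow> 'e set set" where
  "G_state E Q p = {eig_exp E Q p A | A. A \<subseteq> outcomes_state E Q p}"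

definition G_eig :: "'e set \<Rightarrow> 'p set \<Rightarrow> ('e \<Rightarrow> 'p \<Rightarrow> 'x set) \<Rightarrow> 'e set set" where
  "G_eig E St Q = {E \<inter> \<Inter>\<A> | \<A>. \<A> \<subseteq> (\<Union>p\<in>St. G_state E Q p)}"

end

theory Submission
  imports Defs
begin

lemma part1:
  assumes S: "sub_entity_via E St Q E' St' Q' m n l"
    and a: "a \<in> F_exp St Q e" and e: "e \<in> E"
  shows "{p' \<in> St'. m p' \<in> a} \<in> F_exp St' Q' (n e)"
proof -
  from a obtain A where A: "A \<subseteq> outcomes_exp St Q e" and aA: "a = eig_state St Q e A"
    unfolding F_exp_def by blast
  have mS: "\<And>p'. p' \<in> St' \<Longrightarrow> m p' \<in> St" using S unfolding sub_entity_via_def by blast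
  have inj: "inj_on l (outcomes E St Q)" using S unfolding sub_entity_via_def by blast
  have eq: "\<And>p'. p' \<in> St' \<Longrightarrow> l ` Q e (m p') = Q' (n e) p'"
    using S e unfolding sub_entity_via_def by blast
  let ?A' = "l ` A \<inter> outcomes_exp St' Q' (n e)"
  have "{p' \<in> St'. m p' \<in> a} = eig_state St' Q' (n e) ?A'"
  proof (rule set_eqI, rule iffI)
    fix p' assume "p' \<in> {p' \<in> St'. m p' \<in> a}"
    then have p: "p' \<in> St'" "Q e (m p') \<subseteq> A" by (auto simp: aA eig_state_def)
    have "Q' (n e) p' \<subseteq> l ` A" using eq[OF p(1)] p(2) by (metis image_mono)
    moreover have "Q' (n e) p' \<subseteq> outcomes_exp St' Q' (n e)" using p(1) by (auto simp: outcomes_exp_def)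
    ultimately show "p' \<in> eig_state St' Q' (n e) ?A'"
      using p(1) by (auto simp: eig_state_def)
  next
    fix p' assume "p' \<in> eig_state St' Q' (n e) ?A'"
    then have p: "p' \<in> St'" "Q' (n e) p' \<subseteq> l ` A" by (auto simp: eig_state_def)
    have sub1: "Q e (m p') \<subseteq> outcomes E St Q" using mS[OF p(1)] e
      by (auto simp: outcomes_def)
    have sub2: "A \<subseteq> outcomes E St Q" using A e by (auto simp: outcomes_def outcomes_exp_def)
    have "l ` Q e (m p') \<subseteq> l ` A" using eq[OF p(1)] p(2) by simp
    then have "Q e (m p') \<subseteq> A"
    proof -
      assume h: "l ` Q e (m p') \<subseteq> l ` A"
      show ?thesis
      proof
        fix x assume x: "x \<in> Q e (m p')"
        then obtain y where y: "y \<in> A" "l x = l y" using h by blast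
        then show "x \<in> A" using inj sub1 sub2 x by (metis inj_onD subsetD)
      qed
    qed
    then show "p' \<in> {p' \<in> St'. m p' \<in> a}" using p(1) mS[OF p(1)]
      by (auto simp: aA eig_state_def)
  qed
  then show ?thesis unfolding F_exp_def by blast
qed

lemma part2:
  assumes S: "sub_entity_via E St Q E' St' Q' m n l"
    and b: "b \<in> G_state E' Q' p'" and p: "p' \<in> St'"
  shows "{e \<in> E. n e \<in> b} \<in> G_state E Q (m p')"
proof -
  from b obtain B where bB: "b = eig_exp E' Q' p' B"
    unfolding G_state_def by blast
  have nE: "\<And>e. e \<in> E \<Longrightarrow> n e \<in> E'" using S unfolding sub_entity_via_def by blast
  have eq: "\<And>e. e \<in> E \<Longrightarrow> l ` Q e (m p') = Q' (n e) p'"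
    using S p unfolding sub_entity_via_def by blast
  let ?A = "l -` B \<inter> outcomes_state E Q (m p')"
  have "{e \<in> E. n e \<in> b} = eig_exp E Q (m p') ?A"
  proof (rule set_eqI, rule iffI)
    fix e assume "e \<in> {e \<in> E. n e \<in> b}"
    then have h: "e \<in> E" "Q' (n e) p' \<subseteq> B" by (auto simp: bB eig_exp_def)
    then show "e \<in> eig_exp E Q (m p') ?A"
      using eq[OF h(1)] by (auto simp: eig_exp_def outcomes_state_def)
  next
    fix e assume "e \<in> eig_exp E Q (m p') ?A"
    then have h: "e \<in> E" "Q e (m p') \<subseteq> l -` B" by (auto simp: eig_exp_def)
    then have "l ` Q e (m p') \<subseteq> B" by auto
    then have "Q' (n e) p' \<subseteq> B" using eq[OF h(1)] by simp
    then show "e \<in> {e \<in> E. n e \<in> b}" using h nE by (auto simp: bB eig_exp_def)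
  qed
  then show ?thesis unfolding G_state_def by blast
qed

theorem mainTheorem14:
  fixes E :: "'e set" and St :: "'p set" and Q :: "'e \<Rightarrow> 'p \<Rightarrow> 'x set"
    and E' :: "'e2 set" and St' :: "'p2 set" and Q' :: "'e2 \<Rightarrow> 'p2 \<Rightarrow> 'x2 set"
    and m :: "'p2 \<Rightarrow> 'p" and n :: "'e \<Rightarrow> 'e2" and l :: "'x \<Rightarrow> 'x2"
  assumes "entity E St Q" and "entity E' St' Q'"
    and "sub_entity_via E St Q E' St' Q' m n l"
  shows "(\<forall>F \<in> F_eig E St Q. {p' \<in> St'. m p' \<in> F} \<in> F_eig E' St' Q') \<and>
         (\<forall>G' \<in> G_eig E' St' Q'. {e \<in> E. n e \<in> G'} \<in> G_eig E St Q)"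
proof (intro conjI ballI)
  note S = assms(3)
  have mS: "\<And>p'. p' \<in> St' \<Longrightarrow> m p' \<in> St" using S unfolding sub_entity_via_def by blast
  have nE: "\<And>e. e \<in> E \<Longrightarrow> n e \<in> E'" using S unfolding sub_entity_via_def by blast
  fix F assume "F \<in> F_eig E St Q"
  then obtain \<A> where A: "\<A> \<subseteq> (\<Union>e\<in>E. F_exp St Q e)" and F: "F = St \<inter> \<Inter>\<A>"
    unfolding F_eig_def by blast
  let ?B = "(\<lambda>a. {p' \<in> St'. m p' \<in> a}) ` \<A>"
  have "?B \<subseteq> (\<Union>e\<in>E'. F_exp St' Q' e)"
  proof
    fix b assume "b \<in> ?B"
    then obtain a where a: "a \<in> \<A>" "b = {p' \<in> St'. m p' \<in> a}" by blast
    then obtain e where "e \<in> E" "a \<in> F_exp St Q e" using A by blast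
    then show "b \<in> (\<Union>e\<in>E'. F_exp St' Q' e)" using part1[OF S] nE a(2) by blast
  qed
  moreover have "{p' \<in> St'. m p' \<in> F} = St' \<inter> \<Inter>?B" using mS by (auto simp: F)
  ultimately show "{p' \<in> St'. m p' \<in> F} \<in> F_eig E' St' Q'" unfolding F_eig_def by blast
next
  note S = assms(3)
  have mS: "\<And>p'. p' \<in> St' \<Longrightarrow> m p' \<in> St" using S unfolding sub_entity_via_def by blast
  have nE: "\<And>e. e \<in> E \<Longrightarrow> n e \<in> E'" using S unfolding sub_entity_via_def by blast
  fix G' assume "G' \<in> G_eig E' St' Q'"
  then obtain \<A> where A: "\<A> \<subseteq> (\<Union>p\<in>St'. G_state E' Q' p)" and G: "G' = E' \<inter> \<Inter>\<A>"
    unfolding G_eig_def by blast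
  let ?B = "(\<lambda>b. {e \<in> E. n e \<in> b}) ` \<A>"
  have "?B \<subseteq> (\<Union>p\<in>St. G_state E Q p)"
  proof
    fix c assume "c \<in> ?B"
    then obtain b where b: "b \<in> \<A>" "c = {e \<in> E. n e \<in> b}" by blast
    then obtain p' where "p' \<in> St'" "b \<in> G_state E' Q' p'" using A by blast
    then show "c \<in> (\<Union>p\<in>St. G_state E Q p)" using part2[OF S] mS b(2) by blast
  qed
  moreover have "{e \<in> E. n e \<in> G'} = E \<inter> \<Inter>?B" using nE by (auto simp: G)
  ultimately show "{e \<in> E. n e \<in> G'} \<in> G_eig E St Q" unfolding G_eig_def by blast
qed

end
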